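(* Let $N\ge3$, (V),(K) with $b_0>b_*(a_0)$, and $f:\mathbb{R}\to\mathbb{R}$ continuous with $|f(t)|\le M\min\{|t|^{q_1-1},|t|^{q_2-1}\}$ for all $t$, some $M>0$, $q_1\in\mathcal{I}_1(a_0,b_0)$, $q_2\in\mathcal{I}_2(a,b)$. If there exists $\theta<2$ with $\liminf_{t\to0^+}F(t)/t^\theta>0$, then the functional $I:H^1_{V,r}\to\mathbb{R}$ takes negative values.
   Context: $F(t)=\int_0^tf(s)ds$; $I(u)=\frac12\|u\|^2-\int_{\mathbb{R}^N}K(|x|)F(u)dx$ on $H^1_{V,r}$. (V): $V:(0,\infty)\to[0,\infty)$ continuous with $\liminf_{r\to0^+}V(r)/r^{a_0}>0$, $\liminf_{r\to\infty}V(r)/r^a>0$. (K): $K:(0,\infty)\to(0,\infty)$ continuous with $\limsup_{r\to0^+}K(r)/r^{b_0}<\infty$, $\limsup_{r\to\infty}K(r)/r^b<\infty$. $H^1_{V,r}$: radial $u\in D^{1,2}(\mathbb{R}^N)$ with $\int V(|x|)u^2<\infty$, norm $\|u\|^2=\int|\nabla u|^2+\int V(|x|)u^2$. $b_*(a_0):=-\infty$ if $a_0<-(2N-2)$, $\min\{a_0,-\frac{N-a_0}{2},-\frac{N+2}{2}\}$ otherwise. $q_*(a_0,b_0):=\max\{1,2\frac{N+b_0}{N+a_0},2\frac{2N-2+2b_0-a_0}{2N-2+a_0}\}$ if $a_0<-(2N-2)$; $\max\{1,2\frac{N+b_0}{N+a_0}\}$ if $-(2N-2)\le a_0<-N$;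 $1$ if $a_0\ge -N$. $q^*(a_0,b_0):=+\infty$ if $a_0\le-(2N-2)$; $2\frac{2N-2+2b_0-a_0}{2N-2+a_0}$ if $-(2N-2)<a_0\le -N$; $\min\{2\frac{N+b_0}{N+a_0},2\frac{2N-2+2b_0-a_0}{2N-2+a_0}\}$ if $-N<a_0<-2$; $2\frac{N+b_0}{N-2}$ if $a_0\ge-2$. $\mathcal{I}_1=(q_*,q^* )$. $q_{**}(a,b):=\max\{1,2\frac{N+b}{N-2}\}$ if $a\le-2$; $\max\{1,2\frac{N+b}{N+a},2\frac{2N-2+2b-a}{2N-2+a}\}$ if $a>-2$; $\mathcal{I}_2=(q_{**},\infty)$. *)

theory Defs
  imports "HOL-Analysis.Analysis"
begin

definition b_star :: "nat \<Rightarrow> real \<Rightarrow> ereal" where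
  "b_star N a0 = (if a0 < - (2 * real N - 2) then -\<infinity>
     else ereal (min a0 (min (- (real N - a0) / 2) (- (real N + 2) / 2))))"

definition q_lower :: "nat \<Rightarrow> real \<Rightarrow> real \<Rightarrow> real" where
  "q_lower N a0 b0 =
     (if a0 < - (2 * real N - 2) then
        max 1 (max (2 * (real N + b0) / (real N + a0))
                   (2 * (2 * real N - 2 + 2 * b0 - a0) / (2 * real N - 2 + a0)))
      else if a0 < - real N then max 1 (2 * (real N + b0) / (real N + a0))
      else 1)"

definition q_upper :: "nat \<Rightarrow> real \<Rightarrow> real \<Rightarrow> ereal" where
  "q_upper N a0 b0 =
     (if a0 \<le> - (2 * real N - 2) then \<infinity>
      else if a0 \<le> - real N then
        ereal (2 * (2 * real N - 2 + 2 * b0 - a0) / (2 * real N - 2 + a0))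
      else if a0 < -2 then
        ereal (min (2 * (real N + b0) / (real N + a0))
                   (2 * (2 * real N - 2 + 2 * b0 - a0) / (2 * real N - 2 + a0)))
      else ereal (2 * (real N + b0) / (real N - 2)))"

definition q_lower2 :: "nat \<Rightarrow> real \<Rightarrow> real \<Rightarrow> real" where
  "q_lower2 N a b =
     (if a \<le> -2 then max 1 (2 * (real N + b) / (real N - 2))
      else max 1 (max (2 * (real N + b) / (real N + a))
                      (2 * (2 * real N - 2 + 2 * b - a) / (2 * real N - 2 + a))))"

definition in_I1 :: "nat \<Rightarrow> real \<Rightarrow> real \<Rightarrow> real \<Rightarrow> bool" where
  "in_I1 N a0 b0 q \<longleftrightarrow> q_lower N a0 b0 < q \<and> ereal q < q_upper N a0 b0"

definition in_I2 :: "nat \<Rightarrow> real \<Rightarrow> real \<Rightarrow> real \<Rightarrow> bool" where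
  "in_I2 N a b q \<longleftrightarrow> q_lower2 N a b < q"

definition test_fun :: "('a::euclidean_space \<Rightarrow> real) \<Rightarrow> ('a \<Rightarrow> 'a) \<Rightarrow> bool" where
  "test_fun \<phi> g \<longleftrightarrow> (\<forall>x. (\<phi> has_derivative (\<lambda>h. g x \<bullet> h)) (at x))
      \<and> continuous_on UNIV g \<and> bounded {x. \<phi> x \<noteq> 0}"

definition weak_grad :: "('a::euclidean_space \<Rightarrow> real) \<Rightarrow> ('a \<Rightarrow> 'a) \<Rightarrow> bool" where
  "weak_grad u G \<longleftrightarrow> (\<forall>\<phi> g. test_fun \<phi> g \<longrightarrow> (\<forall>i\<in>Basis.
      (\<integral>x. u x * (g x \<bullet> i) \<partial>lborel) = - (\<integral>x. (G x \<bullet> i) * \<phi> x \<partial>lborel)))"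

definition L2_grad :: "('a::euclidean_space \<Rightarrow> real) \<Rightarrow> ('a \<Rightarrow> 'a) \<Rightarrow> bool" where
  "L2_grad u G \<longleftrightarrow> G \<in> borel_measurable lborel
      \<and> integrable lborel (\<lambda>x. (norm (G x))\<^sup>2) \<and> weak_grad u G"

definition D12 :: "('a::euclidean_space \<Rightarrow> real) \<Rightarrow> bool" where
  "D12 u \<longleftrightarrow> u \<in> borel_measurable lborel
      \<and> integrable lborel (\<lambda>x. \<bar>u x\<bar> powr (2 * real DIM('a) / (real DIM('a) - 2)))
      \<and> (\<exists>G. L2_grad u G)"

definition wgrad :: "('a::euclidean_space \<Rightarrow> real) \<Rightarrow> 'a \<Rightarrow> 'a" where
  "wgrad u = (SOME G. L2_grad u G)"

definition radial :: "('a::euclidean_space \<Rightarrow> real) \<Rightarrow> bool" where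
  "radial u \<longleftrightarrow> (\<forall>x y. norm x = norm y \<longrightarrow> u x = u y)"

definition H1Vr :: "(real \<Rightarrow> real) \<Rightarrow> ('a::euclidean_space \<Rightarrow> real) \<Rightarrow> bool" where
  "H1Vr V u \<longleftrightarrow> D12 u \<and> radial u \<and> integrable lborel (\<lambda>x. V (norm x) * (u x)\<^sup>2)"

definition normsq :: "(real \<Rightarrow> real) \<Rightarrow> ('a::euclidean_space \<Rightarrow> real) \<Rightarrow> real" where
  "normsq V u = (\<integral>x. (norm (wgrad u x))\<^sup>2 \<partial>lborel) + (\<integral>x. V (norm x) * (u x)\<^sup>2 \<partial>lborel)"

definition primF :: "(real \<Rightarrow> real) \<Rightarrow> real \<Rightarrow> real" where
  "primF f t = (LBINT s=0..t. f s)"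

definition Ifun :: "(real \<Rightarrow> real) \<Rightarrow> (real \<Rightarrow> real) \<Rightarrow> (real \<Rightarrow> real)
                     \<Rightarrow> ('a::euclidean_space \<Rightarrow> real) \<Rightarrow> real" where
  "Ifun V K f u = normsq V u / 2 - (\<integral>x. K (norm x) * primF f (u x) \<partial>lborel)"

end

theory Submission
  imports Defs
begin


lemma maxsq_bnd: "\<bar>(max 0 n)^2 / n\<bar> \<le> \<bar>n::real\<bar>"
proof (cases "n > 0")
  case True then show ?thesis by (simp add: power2_eq_square)
qed (simp add: max_def)

lemma deriv_maxsq: "((\<lambda>y::real. (max 0 y)^2) has_real_derivative 2 * max 0 y) (at y)"
proof (cases "y = 0")
  case True
  show ?thesis unfolding True has_field_derivative_iff
  proof -
    have "((\<lambda>h::real. (max 0 h)^2 / h) \<longlongrightarrow> 0) (at 0)"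
    proof (rule tendsto_sandwich[where f="\<lambda>h. - \<bar>h\<bar>" and h="\<lambda>h. \<bar>h\<bar>"])
      show "\<forall>\<^sub>F n in at (0::real). - \<bar>n\<bar> \<le> (max 0 n)\<^sup>2 / n"
        by (intro always_eventually allI) (smt (verit) maxsq_bnd)
      show "\<forall>\<^sub>F n in at (0::real). (max 0 n)\<^sup>2 / n \<le> \<bar>n\<bar>"
        by (intro always_eventually allI) (smt (verit) maxsq_bnd)
      show "((\<lambda>n. - \<bar>n\<bar>) \<longlongrightarrow> (0::real)) (at 0)"
        by (auto intro!: tendsto_eq_intros)
      show "((\<lambda>n. \<bar>n\<bar>) \<longlongrightarrow> (0::real)) (at 0)"
        by (auto intro!: tendsto_eq_intros)
    qed
    then show "((\<lambda>ya. ((max 0 ya)\<^sup>2 - (max 0 0)\<^sup>2) / (ya - 0)) \<longlongrightarrow> 2 * max 0 0) (at (0::real))"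
      by simp
  qed
next
  case False
  show ?thesis
  proof (cases "y > 0")
    case True
    have "((\<lambda>y::real. y^2) has_real_derivative 2 * max 0 y) (at y)"
      using True by (auto intro!: derivative_eq_intros)
    then show ?thesis
      apply (rule has_field_derivative_transform_within_open[where S="{0<..}"])
      using True by auto
  next
    case f: False
    have "((\<lambda>y::real. 0) has_real_derivative 2 * max 0 y) (at y)"
      using f by (auto intro!: derivative_eq_intros)
    then show ?thesis
      apply (rule has_field_derivative_transform_within_open[where S="{..<0}"])
      using f False by auto
  qed
qed



lemma cont_cs_integrable:
  fixes f :: "'a::euclidean_space \<Rightarrow> real"
  assumes "continuous_on UNIV f" "\<And>x. norm x > R \<Longrightarrow> f x = 0"
  shows "integrable lborel f"
proof -
  have "integrable lborel (\<lambda>x. indicator (cball 0 R) x *\<^sub>R f x)"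
    by (rule borel_integrable_compact) (auto intro: continuous_on_subset[OF assms(1)])
  also have "(\<lambda>x. indicator (cball 0 R) x *\<^sub>R f x) = f"
    using assms(2) by (auto simp: indicator_def fun_eq_iff not_le)
  finally show ?thesis .
qed

lemma deriv_dir:
  fixes w :: "'a::real_inner \<Rightarrow> real"
  assumes "(w has_derivative (\<lambda>h. g \<bullet> h)) (at x)"
  shows "((\<lambda>t. (w (x + t *\<^sub>R e) - w x) / t) \<longlongrightarrow> g \<bullet> e) (at 0)"
proof -
  have d1: "((\<lambda>t. x + t *\<^sub>R e) has_derivative (\<lambda>t. t *\<^sub>R e)) (at 0)"
    by (auto intro!: derivative_eq_intros)
  have d2: "(w has_derivative (\<lambda>h. g \<bullet> h)) (at (x + 0 *\<^sub>R e))" using assms by simp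
  have "((\<lambda>t. w (x + t *\<^sub>R e)) has_derivative (\<lambda>t. g \<bullet> (t *\<^sub>R e))) (at 0)"
    using has_derivative_compose[OF d1 d2] by (simp add: o_def)
  then have "((\<lambda>t. w (x + t *\<^sub>R e)) has_real_derivative g \<bullet> e) (at 0)"
    unfolding has_field_derivative_def by (simp add: mult.commute[of _ "g \<bullet> e"])
  then show ?thesis unfolding DERIV_def by simp
qed

lemma ibp:
  fixes w :: "'a::euclidean_space \<Rightarrow> real" and g :: "'a \<Rightarrow> 'a"
  assumes der: "\<And>x. (w has_derivative (\<lambda>h. g x \<bullet> h)) (at x)"
    and gc: "continuous_on UNIV g"
    and supp: "\<And>x. norm x > R \<Longrightarrow> w x = 0"
  shows "integrable lborel (\<lambda>x. g x \<bullet> e) \<and> (\<integral>x. g x \<bullet> e \<partial>lborel) = 0"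
proof -
  have wc: "continuous_on UNIV w"
    using der by (meson continuous_at_imp_continuous_on has_derivative_continuous)
  define s where "s n = 1 / real (Suc n)" for n
  have s_pos: "0 < s n" "s n \<le> 1" for n by (auto simp: s_def)
  define D where "D n x = (w (x + s n *\<^sub>R e) - w x) / s n" for n x
  have wi: "integrable lborel w" by (rule cont_cs_integrable[OF wc supp])
  have wsi: "integrable lborel (\<lambda>x. w (c + x))" for c
  proof (rule cont_cs_integrable[where R="R + norm c"])
    show "continuous_on UNIV (\<lambda>x. w (c + x))"
      by (rule continuous_on_compose2[OF wc]) (auto intro!: continuous_intros)
    fix x :: 'a assume "norm x > R + norm c"
    moreover have "norm x \<le> norm (c + x) + norm c" using norm_triangle_ineq4[of "c+x" c] by simp
    ultimately show "w (c + x) = 0" by (intro supp) auto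
  qed
  have trans: "(\<integral>x. w (c + x) \<partial>lborel) = (\<integral>x. w x \<partial>lborel)" for c
  proof -
    have "(\<integral>x. w x \<partial>lborel) = integral\<^sup>L (distr lborel borel ((+) c)) w"
      by (simp add: lborel_distr_plus)
    also have "\<dots> = (\<integral>x. w (c + x) \<partial>lborel)"
      by (rule integral_distr) (auto intro: wc borel_measurable_continuous_onI)
    finally show ?thesis by simp
  qed
  have D0: "(\<integral>x. D n x \<partial>lborel) = 0" for n
  proof -
    have "(\<integral>x. D n x \<partial>lborel) = ((\<integral>x. w (s n *\<^sub>R e + x) \<partial>lborel) - (\<integral>x. w x \<partial>lborel)) / s n"
      unfolding D_def using wsi[of "s n *\<^sub>R e"] wi by (simp add: add.commute)
    then show ?thesis using trans by simp
  qed
  define C where "C = cball (0::'a) (R + 2 * norm e)"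
  have "compact (g ` C)" unfolding C_def
    by (intro compact_continuous_image continuous_on_subset[OF gc]) auto
  then obtain B where B: "B > 0" "\<And>y. y \<in> C \<Longrightarrow> norm (g y) \<le> B"
    using compact_imp_bounded bounded_pos by (metis image_eqI)
  have bound: "norm (D n x) \<le> B * norm e * indicator (cball 0 (R + norm e)) x" for n x
  proof (cases "x \<in> cball 0 (R + norm e)")
    case False
    then have nx: "norm x > R + norm e" by auto
    have "norm x \<le> norm (x + s n *\<^sub>R e) + norm (s n *\<^sub>R e)"
      using norm_triangle_ineq4[of "x + s n *\<^sub>R e" "s n *\<^sub>R e"] by simp
    moreover have "norm (s n *\<^sub>R e) \<le> norm e"
      using s_pos[of n] by (simp add: mult_left_le_one_le)
    ultimately have "norm (x + s n *\<^sub>R e) > R" using nx by linarith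
    then have "w (x + s n *\<^sub>R e) = 0" by (rule supp)
    moreover have "w x = 0" using nx norm_ge_zero[of e] by (intro supp) linarith
    ultimately show ?thesis using False by (simp add: D_def)
  next
    case True
    have sn: "norm (s n *\<^sub>R e) \<le> norm e"
      using s_pos[of n] by (simp add: mult_left_le_one_le)
    have xC: "x \<in> C"
    proof -
      have "norm x \<le> R + norm e" using True by simp
      moreover have "0 \<le> norm e" by simp
      ultimately have "norm x \<le> R + 2 * norm e" by linarith
      then show ?thesis by (simp add: C_def)
    qed
    have xsC: "x + s n *\<^sub>R e \<in> C"
      using True sn norm_triangle_ineq[of x "s n *\<^sub>R e"] by (auto simp: C_def)
    have "norm (w (x + s n *\<^sub>R e) - w x) \<le> B * norm ((x + s n *\<^sub>R e) - x)"
    proof (rule differentiable_bound[where f'="\<lambda>y h. g y \<bullet> h"])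
      show "convex C" by (simp add: C_def)
      show "(w has_derivative (\<lambda>h. g y \<bullet> h)) (at y within C)" for y
        using der has_derivative_at_withinI by blast
      show "onorm (\<lambda>h. g y \<bullet> h) \<le> B" if "y \<in> C" for y
      proof -
        have "onorm (\<lambda>h. g y \<bullet> h) \<le> norm (g y) * onorm (\<lambda>h::'a. h)"
          using onorm_inner_right[of "\<lambda>h::'a. h" "g y"] by simp
        also have "\<dots> \<le> B" using B(2)[OF that] by (simp add: onorm_id)
        finally show ?thesis .
      qed
    qed (use xC xsC in auto)
    then have "\<bar>w (x + s n *\<^sub>R e) - w x\<bar> \<le> B * s n * norm e" using s_pos[of n] by simp
    then show ?thesis using True s_pos[of n] by (simp add: D_def divide_le_eq mult_ac)
  qed
  have lim: "(\<lambda>n. D n x) \<longlonglongrightarrow> g x \<bullet> e" for x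
  proof -
    have s0: "s \<longlonglongrightarrow> 0"
      unfolding s_def using LIMSEQ_Suc[OF lim_const_over_n[of 1]] by simp
    have "filterlim s (at 0) sequentially"
      unfolding filterlim_at using s0
      by (auto intro!: always_eventually dest: spec[of _ 0] simp: s_pos(1) less_imp_neq[OF s_pos(1), symmetric])
    from filterlim_compose[OF deriv_dir[OF der[of x], of e] this] show ?thesis
      by (simp add: D_def o_def)
  qed
  have Dm: "D n \<in> borel_measurable lborel" for n
  proof -
    have "continuous_on UNIV (\<lambda>x. w (x + s n *\<^sub>R e))"
      by (rule continuous_on_compose2[OF wc]) (auto intro!: continuous_intros)
    then have "continuous_on UNIV (D n)" unfolding D_def
      by (intro continuous_intros wc) (use s_pos(1)[of n] in auto)
    then show ?thesis unfolding measurable_lborel2 by (rule borel_measurable_continuous_onI)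
  qed
  have gm: "(\<lambda>x. g x \<bullet> e) \<in> borel_measurable lborel"
    unfolding measurable_lborel2 by (intro borel_measurable_continuous_onI continuous_intros gc)
  have wint: "integrable lborel (\<lambda>x. B * norm e * indicator (cball 0 (R + norm e)) x)"
    by (intro integrable_mult_right integrable_real_indicator emeasure_lborel_cball_finite) auto
  have i1: "integrable lborel (\<lambda>x. g x \<bullet> e)"
    by (rule integrable_dominated_convergence[where s=D, OF gm Dm wint]) (use lim bound in auto)
  have "(\<lambda>n. \<integral>x. D n x \<partial>lborel) \<longlonglongrightarrow> (\<integral>x. g x \<bullet> e \<partial>lborel)"
    by (rule integral_dominated_convergence[where s=D, OF gm Dm wint]) (use lim bound in auto)
  then have "(\<lambda>n. 0::real) \<longlonglongrightarrow> (\<integral>x. g x \<bullet> e \<partial>lborel)" by (simp add: D0)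
  then have "(\<integral>x. g x \<bullet> e \<partial>lborel) = 0" using LIMSEQ_unique tendsto_const by blast
  with i1 show ?thesis by simp
qed



definition msq :: "real \<Rightarrow> real" where "msq y = (max 0 y)^2"

lemma msq_deriv[derivative_intros]:
  "(f has_real_derivative f') (at x within S) \<Longrightarrow>
   ((\<lambda>x. msq (f x)) has_real_derivative (2 * max 0 (f x) * f')) (at x within S)"
  unfolding msq_def
  using DERIV_chain2[OF deriv_maxsq, of f f' x S] by (simp add: mult_ac)

lemma msq_nonneg: "msq y \<ge> 0" by (simp add: msq_def)
lemma msq_pos_iff: "msq y > 0 \<longleftrightarrow> y > 0" by (auto simp: msq_def max_def)
lemma msq_cont[continuous_intros]: "continuous_on S f \<Longrightarrow> continuous_on S (\<lambda>x. msq (f x))"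
  unfolding msq_def by (intro continuous_intros)

definition Pab :: "real \<Rightarrow> real \<Rightarrow> real \<Rightarrow> real" where
  "Pab \<alpha> \<beta> s = msq (s - \<alpha>) * msq (\<beta> - s)"

definition eta :: "real \<Rightarrow> real \<Rightarrow> real \<Rightarrow> real \<Rightarrow> real" where
  "eta n \<alpha> \<beta> s = n * Pab \<alpha> \<beta> s / (1 + n * Pab \<alpha> \<beta> s)"

definition eta' :: "real \<Rightarrow> real \<Rightarrow> real \<Rightarrow> real \<Rightarrow> real" where
  "eta' n \<alpha> \<beta> s = n * (2 * max 0 (s - \<alpha>) * msq (\<beta> - s) - msq (s - \<alpha>) * (2 * max 0 (\<beta> - s)))
       / (1 + n * Pab \<alpha> \<beta> s)^2"

lemma Pab_nonneg: "Pab \<alpha> \<beta> s \<ge> 0" by (simp add: Pab_def msq_nonneg)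

lemma eta_deriv:
  assumes "n \<ge> 0"
  shows "(eta n \<alpha> \<beta> has_real_derivative eta' n \<alpha> \<beta> s) (at s)"
proof -
  have pos: "1 + n * Pab \<alpha> \<beta> s > 0" using assms Pab_nonneg[of \<alpha> \<beta> s] by (simp add: add_pos_nonneg)
  show ?thesis
    unfolding eta_def[abs_def] eta'_def Pab_def
    apply (rule derivative_eq_intros refl)+
    using pos apply (simp_all add: Pab_def)
    apply (simp add: power2_eq_square algebra_simps)
    done
qed

lemma eta'_cont: assumes "n \<ge> 0" shows "continuous_on UNIV (eta' n \<alpha> \<beta>)"
proof -
  have "1 + n * Pab \<alpha> \<beta> s \<noteq> 0" for s using Pab_nonneg[of \<alpha> \<beta> s] assms
    by (metis add_pos_nonneg less_numeral_extra(1) mult_nonneg_nonneg order_less_irrefl)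
  then show ?thesis
    unfolding eta'_def[abs_def] Pab_def
    by (intro continuous_intros) (auto simp: Pab_def)
qed

lemma eta_bounds: "n \<ge> 0 \<Longrightarrow> 0 \<le> eta n \<alpha> \<beta> s \<and> eta n \<alpha> \<beta> s \<le> 1"
  using Pab_nonneg[of \<alpha> \<beta> s] by (simp add: eta_def divide_simps add_pos_nonneg)

lemma eta_zero: "\<not> (\<alpha> < s \<and> s < \<beta>) \<Longrightarrow> eta n \<alpha> \<beta> s = 0"
  by (auto simp: eta_def Pab_def msq_def max_def)

lemma eta_lim: "(\<lambda>k. eta (real k) \<alpha> \<beta> s) \<longlonglongrightarrow> (if \<alpha> < s \<and> s < \<beta> then 1 else 0)"
proof (cases "\<alpha> < s \<and> s < \<beta>")
  case True
  then have P: "Pab \<alpha> \<beta> s > 0" by (simp add: Pab_def msq_pos_iff)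
  have "filterlim (\<lambda>k. real k * Pab \<alpha> \<beta> s) at_top sequentially"
    using filterlim_at_top_mult_tendsto_pos[OF tendsto_const P filterlim_real_sequentially] by simp
  then have "filterlim (\<lambda>k. 1 + real k * Pab \<alpha> \<beta> s) at_top sequentially"
    by (rule filterlim_tendsto_add_at_top[OF tendsto_const])
  then have "(\<lambda>k. inverse (1 + real k * Pab \<alpha> \<beta> s)) \<longlonglongrightarrow> 0"
    by (rule tendsto_inverse_0_at_top)
  then have "(\<lambda>k. 1 - inverse (1 + real k * Pab \<alpha> \<beta> s)) \<longlonglongrightarrow> 1 - 0"
    by (intro tendsto_diff tendsto_const)
  moreover have e1: "eta (real k) \<alpha> \<beta> s = 1 - inverse (1 + real k * Pab \<alpha> \<beta> s)" for k
  proof -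
    have "1 + real k * Pab \<alpha> \<beta> s > 0" using P by (simp add: add_pos_nonneg)
    then show ?thesis by (simp add: eta_def field_simps)
  qed
  ultimately show ?thesis
    by (simp only: if_P[OF True] e1 diff_zero)
next
  case False
  then have "eta (real k) \<alpha> \<beta> s = 0" for k by (rule eta_zero)
  then have eq: "(\<lambda>k. eta (real k) \<alpha> \<beta> s) = (\<lambda>k. 0)" by (rule ext)
  show ?thesis by (simp only: if_not_P[OF False] eq) (rule tendsto_const)
qed



lemma eta_cont: "n \<ge> 0 \<Longrightarrow> continuous_on UNIV (eta n \<alpha> \<beta>)"
  by (meson DERIV_isCont continuous_at_imp_continuous_on eta_deriv)

definition phiB :: "real \<Rightarrow> 'a::euclidean_space \<Rightarrow> 'a \<Rightarrow> 'a \<Rightarrow> real" where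
  "phiB n a b x = (\<Prod>j\<in>Basis. eta n (a \<bullet> j) (b \<bullet> j) (x \<bullet> j))"

definition gradB :: "real \<Rightarrow> 'a::euclidean_space \<Rightarrow> 'a \<Rightarrow> 'a \<Rightarrow> 'a" where
  "gradB n a b x = (\<Sum>i\<in>Basis. (eta' n (a \<bullet> i) (b \<bullet> i) (x \<bullet> i) *
      (\<Prod>j\<in>Basis - {i}. eta n (a \<bullet> j) (b \<bullet> j) (x \<bullet> j))) *\<^sub>R i)"

lemma comp_inner_deriv:
  assumes "(g has_real_derivative d) (at (x \<bullet> i))"
  shows "((\<lambda>x. g (x \<bullet> i)) has_derivative (\<lambda>y. d * (y \<bullet> i))) (at x)"
proof -
  have d1: "((\<lambda>x. x \<bullet> i) has_derivative (\<lambda>y. y \<bullet> i)) (at x)"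
    by (auto intro!: derivative_eq_intros)
  have d2: "(g has_derivative (\<lambda>y. d * y)) (at (x \<bullet> i))"
    using assms by (simp add: has_field_derivative_def)
  show ?thesis using has_derivative_compose[OF d1 d2] by (simp add: o_def)
qed

lemma phiB_test:
  fixes a b :: "'a::euclidean_space"
  assumes n: "n \<ge> 0"
  shows "test_fun (phiB n a b) (gradB n a b)"
  unfolding test_fun_def
proof (intro conjI allI)
  fix x :: 'a
  have d: "((\<lambda>x. eta n (a \<bullet> i) (b \<bullet> i) (x \<bullet> i)) has_derivative
       (\<lambda>y. eta' n (a \<bullet> i) (b \<bullet> i) (x \<bullet> i) * (y \<bullet> i))) (at x)" for i
    by (rule comp_inner_deriv[OF eta_deriv[OF n]])
  have "(phiB n a b has_derivative (\<lambda>y. \<Sum>i\<in>Basis. eta' n (a \<bullet> i) (b \<bullet> i) (x \<bullet> i) * (y \<bullet> i) *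
      (\<Prod>j\<in>Basis - {i}. eta n (a \<bullet> j) (b \<bullet> j) (x \<bullet> j)))) (at x)"
    unfolding phiB_def[abs_def]
    by (rule has_derivative_prod[of Basis "\<lambda>i x. eta n (a \<bullet> i) (b \<bullet> i) (x \<bullet> i)"
        "\<lambda>i y. eta' n (a \<bullet> i) (b \<bullet> i) (x \<bullet> i) * (y \<bullet> i)", OF d])
  moreover have "(\<lambda>y. \<Sum>i\<in>Basis. eta' n (a \<bullet> i) (b \<bullet> i) (x \<bullet> i) * (y \<bullet> i) *
      (\<Prod>j\<in>Basis - {i}. eta n (a \<bullet> j) (b \<bullet> j) (x \<bullet> j))) = (\<lambda>h. gradB n a b x \<bullet> h)"
    by (auto simp: fun_eq_iff gradB_def inner_sum_left inner_sum_right inner_commute mult_ac intro!: sum.cong)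
  ultimately show "(phiB n a b has_derivative (\<lambda>h. gradB n a b x \<bullet> h)) (at x)" by simp
next
  have c1: "continuous_on UNIV (\<lambda>x. eta n (a \<bullet> i) (b \<bullet> i) (x \<bullet> i))" for i
    by (rule continuous_on_compose2[OF eta_cont[OF n]]) (auto intro: continuous_intros)
  have c2: "continuous_on UNIV (\<lambda>x. eta' n (a \<bullet> i) (b \<bullet> i) (x \<bullet> i))" for i
    by (rule continuous_on_compose2[OF eta'_cont[OF n]]) (auto intro: continuous_intros)
  show "continuous_on UNIV (gradB n a b)"
    unfolding gradB_def[abs_def]
    by (intro continuous_intros c1 c2)
next
  have "{x. phiB n a b x \<noteq> 0} \<subseteq> box a b"
  proof
    fix x assume "x \<in> {x. phiB n a b x \<noteq> 0}"
    then have "\<forall>j\<in>Basis. eta n (a \<bullet> j) (b \<bullet> j) (x \<bullet> j) \<noteq> 0"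
      by (auto simp: phiB_def)
    then show "x \<in> box a b" using eta_zero by (auto simp: mem_box) (metis eta_zero)+
  qed
  then show "bounded {x. phiB n a b x \<noteq> 0}"
    by (rule bounded_subset[OF bounded_box])
qed

lemma phiB_lim: "(\<lambda>k. phiB (real k) a b x) \<longlonglongrightarrow> indicator (box a b) x"
proof -
  have "(\<lambda>k. phiB (real k) a b x) \<longlonglongrightarrow>
      (\<Prod>j\<in>Basis. if a \<bullet> j < x \<bullet> j \<and> x \<bullet> j < b \<bullet> j then 1 else 0)"
    unfolding phiB_def by (intro tendsto_prod eta_lim)
  moreover have "(\<Prod>j\<in>Basis. if a \<bullet> j < x \<bullet> j \<and> x \<bullet> j < b \<bullet> j then 1 else (0::real))
      = indicator (box a b) x"
    by (auto simp: indicator_def mem_box)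
  ultimately show ?thesis by simp
qed

lemma phiB_bound:
  assumes "n \<ge> 0"
  shows "\<bar>phiB n a b x\<bar> \<le> indicator (box a b) x"
proof (cases "x \<in> box a b")
  case True
  have "0 \<le> phiB n a b x" "phiB n a b x \<le> 1"
    unfolding phiB_def using eta_bounds[OF assms]
    by (auto intro!: prod_nonneg prod_le_1)
  then show ?thesis using True by simp
next
  case False
  then obtain j where "j \<in> Basis" "\<not> (a \<bullet> j < x \<bullet> j \<and> x \<bullet> j < b \<bullet> j)"
    by (auto simp: mem_box)
  then have "phiB n a b x = 0" unfolding phiB_def
    by (intro prod_zero) (auto intro!: bexI[of _ j] eta_zero)
  then show ?thesis by simp
qed

lemma phiB_meas: "n \<ge> 0 \<Longrightarrow> phiB n a b \<in> borel_measurable lborel"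
  using phiB_test[of n a b] unfolding test_fun_def measurable_lborel2
  by (meson borel_measurable_continuous_onI continuous_at_imp_continuous_on has_derivative_continuous)

lemma max_abs1: "ennreal (max 0 y) * indicator A x = ennreal ((\<bar>indicator A x * y\<bar> + indicator A x * y) / 2)"
proof (cases "x \<in> A")
  case True
  have "max 0 y = (\<bar>y\<bar> + y) / 2" by (cases "y \<ge> 0") auto
  then show ?thesis using True by simp
qed simp

lemma max_abs2: "ennreal (max 0 (- y)) * indicator A x = ennreal ((\<bar>indicator A x * y\<bar> - indicator A x * y) / 2)"
proof (cases "x \<in> A")
  case True
  have "max 0 (- y) = (\<bar>y\<bar> - y) / 2" by (cases "y \<ge> 0") auto
  then show ?thesis using True by simp
qed simp

lemma FL:
  fixes h :: "'a::euclidean_space \<Rightarrow> real"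
  assumes hm: "h \<in> borel_measurable lborel"
    and loc: "\<And>a b. integrable lborel (\<lambda>x. indicator (box a b) x * h x)"
    and orth: "\<And>\<phi> g. test_fun \<phi> g \<Longrightarrow> (\<integral>x. h x * \<phi> x \<partial>lborel) = 0"
  shows "AE x in lborel. h x = 0"
proof -
  have box0: "(\<integral>x. indicator (box a b) x * h x \<partial>lborel) = 0" for a b :: 'a
  proof -
    have "(\<lambda>k. \<integral>x. h x * phiB (real k) a b x \<partial>lborel) \<longlonglongrightarrow> (\<integral>x. indicator (box a b) x * h x \<partial>lborel)"
    proof (rule integral_dominated_convergence[where w="\<lambda>x. \<bar>indicator (box a b) x * h x\<bar>"])
      show "(\<lambda>x. indicator (box a b) x * h x) \<in> borel_measurable lborel"
        using loc by (rule borel_measurable_integrable)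
      show "(\<lambda>x. h x * phiB (real k) a b x) \<in> borel_measurable lborel" for k
        using hm phiB_meas[of "real k" a b] by measurable
      show "integrable lborel (\<lambda>x. \<bar>indicator (box a b) x * h x\<bar>)"
        using loc by (rule integrable_abs)
      show "AE x in lborel. (\<lambda>k. h x * phiB (real k) a b x) \<longlonglongrightarrow> indicator (box a b) x * h x"
      proof (intro AE_I2)
        fix x
        show "(\<lambda>k. h x * phiB (real k) a b x) \<longlonglongrightarrow> indicator (box a b) x * h x"
          using tendsto_mult[OF tendsto_const[of "h x"] phiB_lim[of a b x]] by (simp add: mult.commute)
      qed
      show "AE x in lborel. norm (h x * phiB (real k) a b x) \<le> \<bar>indicator (box a b) x * h x\<bar>" for k
      proof (intro AE_I2)
        fix x
        have "\<bar>phiB (real k) a b x\<bar> \<le> indicator (box a b) x" by (rule phiB_bound) simp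
        then have "\<bar>h x\<bar> * \<bar>phiB (real k) a b x\<bar> \<le> \<bar>h x\<bar> * indicator (box a b) x"
          by (rule mult_left_mono) simp
        then show "norm (h x * phiB (real k) a b x) \<le> \<bar>indicator (box a b) x * h x\<bar>"
          by (simp add: abs_mult mult.commute)
      qed
    qed
    moreover have "(\<integral>x. h x * phiB (real k) a b x \<partial>lborel) = 0" for k
      by (rule orth[OF phiB_test]) simp
    ultimately have "(\<lambda>k. 0::real) \<longlonglongrightarrow> (\<integral>x. indicator (box a b) x * h x \<partial>lborel)"
      by simp
    from LIMSEQ_unique[OF tendsto_const this] show ?thesis by simp
  qed
  define f1 where "f1 x = ennreal (max 0 (h x))" for x
  define f2 where "f2 x = ennreal (max 0 (- h x))" for x
  have f1m: "f1 \<in> borel_measurable lborel" unfolding f1_def using hm by measurable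
  have f2m: "f2 \<in> borel_measurable lborel" unfolding f2_def using hm by measurable
  have em: "emeasure (density lborel f1) (box a b) =
      ennreal (((\<integral>x. \<bar>indicator (box a b) x * h x\<bar> \<partial>lborel) + (\<integral>x. indicator (box a b) x * h x \<partial>lborel)) / 2)
    \<and> emeasure (density lborel f2) (box a b) =
      ennreal (((\<integral>x. \<bar>indicator (box a b) x * h x\<bar> \<partial>lborel) - (\<integral>x. indicator (box a b) x * h x \<partial>lborel)) / 2)"
    for a b :: 'a
  proof -
    let ?F = "\<lambda>x. indicator (box a b) x * h x"
    have i1: "integrable lborel (\<lambda>x. (\<bar>?F x\<bar> + ?F x) / 2)"
      using loc[of a b] by (intro integrable_divide Bochner_Integration.integrable_add integrable_abs)
    have i2: "integrable lborel (\<lambda>x. (\<bar>?F x\<bar> - ?F x) / 2)"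
      using loc[of a b] by (intro integrable_divide Bochner_Integration.integrable_diff integrable_abs)
    have "emeasure (density lborel f1) (box a b) = (\<integral>\<^sup>+x. f1 x * indicator (box a b) x \<partial>lborel)"
      by (rule emeasure_density[OF f1m]) simp
    also have "\<dots> = (\<integral>\<^sup>+x. ennreal ((\<bar>?F x\<bar> + ?F x) / 2) \<partial>lborel)"
      by (intro nn_integral_cong) (simp only: f1_def max_abs1)
    also have "\<dots> = ennreal (\<integral>x. (\<bar>?F x\<bar> + ?F x) / 2 \<partial>lborel)"
      by (rule nn_integral_eq_integral[OF i1]) auto
    also have "(\<integral>x. (\<bar>?F x\<bar> + ?F x) / 2 \<partial>lborel) = ((\<integral>x. \<bar>?F x\<bar> \<partial>lborel) + (\<integral>x. ?F x \<partial>lborel)) / 2"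
      using Bochner_Integration.integral_add[OF integrable_abs[OF loc[of a b]] loc[of a b]] by simp
    finally have A: "emeasure (density lborel f1) (box a b) =
      ennreal (((\<integral>x. \<bar>?F x\<bar> \<partial>lborel) + (\<integral>x. ?F x \<partial>lborel)) / 2)" .
    have "emeasure (density lborel f2) (box a b) = (\<integral>\<^sup>+x. f2 x * indicator (box a b) x \<partial>lborel)"
      by (rule emeasure_density[OF f2m]) simp
    also have "\<dots> = (\<integral>\<^sup>+x. ennreal ((\<bar>?F x\<bar> - ?F x) / 2) \<partial>lborel)"
      by (intro nn_integral_cong) (simp only: f2_def max_abs2)
    also have "\<dots> = ennreal (\<integral>x. (\<bar>?F x\<bar> - ?F x) / 2 \<partial>lborel)"
      by (rule nn_integral_eq_integral[OF i2]) auto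
    also have "(\<integral>x. (\<bar>?F x\<bar> - ?F x) / 2 \<partial>lborel) = ((\<integral>x. \<bar>?F x\<bar> \<partial>lborel) - (\<integral>x. ?F x \<partial>lborel)) / 2"
      using Bochner_Integration.integral_diff[OF integrable_abs[OF loc[of a b]] loc[of a b]] by simp
    finally show ?thesis using A by simp
  qed
  have "density lborel f1 = density lborel f2"
  proof (rule measure_eqI_generator_eq[where \<Omega>=UNIV and E="range (\<lambda>(a, b). box a b)"
        and A="\<lambda>n::nat. box (- (real n *\<^sub>R One)) (real n *\<^sub>R One)"])
    show "Int_stable (range (\<lambda>(a, b). box a b::'a set))"
      by (auto simp: Int_stable_def box_Int_box)
    show "range (\<lambda>(a, b). box a b::'a set) \<subseteq> Pow UNIV" by auto
    show "sets (density lborel f1) = sigma_sets UNIV (range (\<lambda>(a, b). box a b))"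
      by (simp add: borel_eq_box)
    show "sets (density lborel f2) = sigma_sets UNIV (range (\<lambda>(a, b). box a b))"
      by (simp add: borel_eq_box)
    show "range (\<lambda>n::nat. box (- (real n *\<^sub>R One)) (real n *\<^sub>R One)) \<subseteq> range (\<lambda>(a, b). box a b::'a set)"
      by auto
    show "(\<Union>n::nat. box (- (real n *\<^sub>R One)) (real n *\<^sub>R One)) = (UNIV::'a set)"
      unfolding UN_box_eq_UNIV by auto
    show "emeasure (density lborel f1) (box (- (real n *\<^sub>R One)) (real n *\<^sub>R One)) \<noteq> \<infinity>" for n
      using em by simp
    show "emeasure (density lborel f1) X = emeasure (density lborel f2) X"
      if XE: "X \<in> range (\<lambda>(a, b). box a b)" for X
    proof -
      obtain a b where X: "X = box a b" using XE by auto
      show ?thesis unfolding X using em[of a b] box0[of a b] by simp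
    qed
  qed
  then have "AE x in lborel. f1 x = f2 x"
    by (rule sigma_finite_measure.density_unique[OF sigma_finite_lborel f1m f2m])
  then show ?thesis
  proof (rule AE_mp, intro AE_I2 impI)
    fix x assume "f1 x = f2 x"
    then have "max 0 (h x) = max 0 (- h x)" unfolding f1_def f2_def
      by (subst (asm) ennreal_inj) auto
    then show "h x = 0" by (cases "h x \<ge> 0") auto
  qed
qed



definition pp :: "real \<Rightarrow> real" where "pp s = (s - 1) * (4 - s)"
definition ub :: "'a::euclidean_space \<Rightarrow> real" where "ub x = msq (pp (x \<bullet> x))"
definition gu :: "'a::euclidean_space \<Rightarrow> 'a" where
  "gu x = (2 * max 0 (pp (x \<bullet> x)) * (5 - 2 * (x \<bullet> x)) * 2) *\<^sub>R x"

lemma real_comp_deriv: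
  assumes "(g has_real_derivative d) (at (F x))" "(F has_derivative F') (at x)"
  shows "((\<lambda>x. g (F x)) has_derivative (\<lambda>h. d * F' h)) (at x)"
proof -
  have d2: "(g has_derivative (\<lambda>y. d * y)) (at (F x))"
    using assms(1) by (simp add: has_field_derivative_def)
  show ?thesis using has_derivative_compose[OF assms(2) d2] by (simp add: o_def)
qed

lemma ub_deriv: "(ub has_derivative (\<lambda>h. gu x \<bullet> h)) (at x)"
proof -
  have d1: "((\<lambda>x::'a. x \<bullet> x) has_derivative (\<lambda>h. 2 * (x \<bullet> h))) (at x)"
    by (auto intro!: derivative_eq_intros simp: inner_commute)
  have dp: "(pp has_real_derivative (5 - 2 * s)) (at s)" for s
    unfolding pp_def[abs_def] by (auto intro!: derivative_eq_intros)
  have d2: "((\<lambda>x::'a. pp (x \<bullet> x)) has_derivative (\<lambda>h. (5 - 2 * (x \<bullet> x)) * (2 * (x \<bullet> h)))) (at x)"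
    by (rule real_comp_deriv[OF dp d1])
  have dm: "(msq has_real_derivative 2 * max 0 y) (at y)" for y
    using msq_deriv[OF DERIV_ident, of y UNIV] by simp
  have "(ub has_derivative (\<lambda>h. 2 * max 0 (pp (x \<bullet> x)) * ((5 - 2 * (x \<bullet> x)) * (2 * (x \<bullet> h))))) (at x)"
    unfolding ub_def[abs_def] by (rule real_comp_deriv[OF dm d2])
  moreover have "(\<lambda>h. 2 * max 0 (pp (x \<bullet> x)) * ((5 - 2 * (x \<bullet> x)) * (2 * (x \<bullet> h)))) = (\<lambda>h. gu x \<bullet> h)"
    by (auto simp: gu_def fun_eq_iff mult_ac)
  ultimately show ?thesis by simp
qed

lemma pp_pos: "pp (x \<bullet> x) > 0 \<Longrightarrow> norm x < 2"
proof -
  assume "pp (x \<bullet> x) > 0"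
  then have "x \<bullet> x < 4" unfolding pp_def
  proof (rule contrapos_pp)
    assume "\<not> x \<bullet> x < 4"
    then have "(x \<bullet> x - 1) * (4 - x \<bullet> x) \<le> 0" by (intro mult_nonneg_nonpos) auto
    then show "\<not> 0 < (x \<bullet> x - 1) * (4 - x \<bullet> x)" by simp
  qed
  then have "(norm x)^2 < 2^2" by (simp add: power2_norm_eq_inner)
  then show "norm x < 2" by (rule power2_less_imp_less) simp
qed

lemma max_pp0: "norm x > 2 \<Longrightarrow> max 0 (pp (x \<bullet> x)) = 0"
  using pp_pos[of x] by (cases "pp (x \<bullet> x) > 0") auto

lemma ub_supp: "norm x > 2 \<Longrightarrow> ub x = 0"
  using max_pp0[of x] by (simp add: ub_def msq_def)

lemma gu_supp: "norm x > 2 \<Longrightarrow> gu x = 0"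
  using max_pp0[of x] by (simp add: gu_def)

lemma ub_cont: "continuous_on UNIV (ub :: 'a::euclidean_space \<Rightarrow> real)"
  unfolding ub_def[abs_def] pp_def by (intro continuous_intros)

lemma gu_cont: "continuous_on UNIV (gu :: 'a::euclidean_space \<Rightarrow> 'a)"
  unfolding gu_def[abs_def] pp_def by (intro continuous_intros)

lemma ub_nonneg: "ub x \<ge> 0" by (simp add: ub_def msq_nonneg)

lemma test_cont: "test_fun \<phi> g \<Longrightarrow> continuous_on UNIV \<phi>"
  unfolding test_fun_def
  by (meson continuous_at_imp_continuous_on has_derivative_continuous)

lemma test_supp:
  fixes \<phi> :: "'a::euclidean_space \<Rightarrow> real"
  assumes "test_fun \<phi> g" obtains R where "\<And>x. norm x > R \<Longrightarrow> \<phi> x = 0"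
proof -
  from assms have "bounded {x. \<phi> x \<noteq> 0}" by (simp add: test_fun_def)
  then obtain R where "\<And>x. x \<in> {x. \<phi> x \<noteq> 0} \<Longrightarrow> norm x \<le> R" by (auto simp: bounded_iff)
  then show ?thesis using that by (metis mem_Collect_eq not_le)
qed

lemma weak_ub:
  fixes \<phi> :: "'a::euclidean_space \<Rightarrow> real"
  assumes tf: "test_fun \<phi> g"
  shows "(\<integral>x. ub x * (g x \<bullet> i) \<partial>lborel) = - (\<integral>x. (gu x \<bullet> i) * \<phi> x \<partial>lborel)"
proof -
  have phic: "continuous_on UNIV \<phi>" by (rule test_cont[OF tf])
  have gc: "continuous_on UNIV g" using tf by (simp add: test_fun_def)
  have der: "\<And>x. (\<phi> has_derivative (\<lambda>h. g x \<bullet> h)) (at x)" using tf by (simp add: test_fun_def)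
  have wd: "((\<lambda>x. ub x * \<phi> x) has_derivative (\<lambda>h. (\<phi> x *\<^sub>R gu x + ub x *\<^sub>R g x) \<bullet> h)) (at x)" for x
  proof -
    have "((\<lambda>x. ub x * \<phi> x) has_derivative (\<lambda>h. ub x * (g x \<bullet> h) + (gu x \<bullet> h) * \<phi> x)) (at x)"
      by (rule has_derivative_mult[OF ub_deriv der])
    moreover have "(\<lambda>h. ub x * (g x \<bullet> h) + (gu x \<bullet> h) * \<phi> x) = (\<lambda>h. (\<phi> x *\<^sub>R gu x + ub x *\<^sub>R g x) \<bullet> h)"
      by (auto simp: fun_eq_iff inner_add_left mult_ac)
    ultimately show ?thesis by simp
  qed
  have "integrable lborel (\<lambda>x. (\<phi> x *\<^sub>R gu x + ub x *\<^sub>R g x) \<bullet> i) \<and>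
      (\<integral>x. (\<phi> x *\<^sub>R gu x + ub x *\<^sub>R g x) \<bullet> i \<partial>lborel) = 0"
    by (rule ibp[OF wd, where R=2]) (auto intro!: continuous_intros phic gc gu_cont ub_cont ub_supp)
  then have I0: "(\<integral>x. (gu x \<bullet> i) * \<phi> x + ub x * (g x \<bullet> i) \<partial>lborel) = 0"
    by (simp add: inner_add_left mult_ac)
  have i1: "integrable lborel (\<lambda>x. (gu x \<bullet> i) * \<phi> x)"
    by (rule cont_cs_integrable[where R=2]) (auto intro!: continuous_intros phic gu_cont simp: gu_supp)
  have i2: "integrable lborel (\<lambda>x. ub x * (g x \<bullet> i))"
    by (rule cont_cs_integrable[where R=2]) (auto intro!: continuous_intros gc ub_cont ub_supp)
  show ?thesis using I0 Bochner_Integration.integral_add[OF i1 i2] by simp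
qed

lemma le_sq1: "(y::real) \<le> y^2 + 1"
proof -
  have "0 \<le> (y - 1)^2" by simp
  then have "2 * y \<le> y^2 + 1" by (simp add: power2_eq_square algebra_simps)
  moreover have "0 \<le> y^2" by simp
  ultimately show ?thesis by (cases "y \<ge> 0") linarith+
qed

lemma ab_le:
  fixes a b :: real assumes "a \<ge> 0" "b \<ge> 0" shows "a * b \<le> a^2 + b^2"
proof -
  have "0 \<le> (a - b)^2" by simp
  then have "2 * (a * b) \<le> a^2 + b^2" by (simp add: power2_eq_square algebra_simps)
  moreover have "0 \<le> a * b" using assms by simp
  ultimately show ?thesis by linarith
qed

lemma ub_supp1: "norm x < 1 \<Longrightarrow> ub x = 0"
proof -
  assume "norm x < 1"
  then have "(norm x)^2 < 1" by (simp add: power_less_one_iff abs_less_iff)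
  then have "x \<bullet> x < 1" by (simp add: power2_norm_eq_inner)
  then have "pp (x \<bullet> x) \<le> 0" unfolding pp_def by (intro mult_nonpos_nonneg) auto
  then show "ub x = 0" by (simp add: ub_def msq_def max_def)
qed

lemma L2_grad_ut: "L2_grad (\<lambda>x::'a::euclidean_space. t * ub x) (\<lambda>x. t *\<^sub>R gu x)"
  unfolding L2_grad_def
proof (intro conjI)
  show "(\<lambda>x::'a. t *\<^sub>R gu x) \<in> borel_measurable lborel"
    unfolding measurable_lborel2 by (intro borel_measurable_continuous_onI continuous_intros gu_cont)
  show "integrable lborel (\<lambda>x::'a. (norm (t *\<^sub>R gu x))\<^sup>2)"
    by (rule cont_cs_integrable[where R=2]) (auto intro!: continuous_intros gu_cont simp: gu_supp)
  show "weak_grad (\<lambda>x::'a. t * ub x) (\<lambda>x. t *\<^sub>R gu x)"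
    unfolding weak_grad_def
  proof (intro allI impI ballI)
    fix \<phi> :: "'a \<Rightarrow> real" and g i assume tf: "test_fun \<phi> g"
    have "(\<integral>x. t * ub x * (g x \<bullet> i) \<partial>lborel) = t * (\<integral>x. ub x * (g x \<bullet> i) \<partial>lborel)"
      by (simp add: mult.assoc)
    also have "\<dots> = t * (- (\<integral>x. (gu x \<bullet> i) * \<phi> x \<partial>lborel))" by (simp add: weak_ub[OF tf])
    also have "\<dots> = - (\<integral>x. (t *\<^sub>R gu x \<bullet> i) * \<phi> x \<partial>lborel)"
      by (simp add: mult.assoc)
    finally show "(\<integral>x. t * ub x * (g x \<bullet> i) \<partial>lborel) = - (\<integral>x. (t *\<^sub>R gu x \<bullet> i) * \<phi> x \<partial>lborel)" .
  qed
qed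

lemma grad_unique:
  fixes G :: "'a::euclidean_space \<Rightarrow> 'a"
  assumes LG: "L2_grad (\<lambda>x. t * ub x) G"
  shows "AE x in lborel. G x = t *\<^sub>R gu x"
proof -
  have Gm: "G \<in> borel_measurable lborel" and Gi: "integrable lborel (\<lambda>x. (norm (G x))\<^sup>2)"
    and Gw: "weak_grad (\<lambda>x. t * ub x) G" using LG by (auto simp: L2_grad_def)
  have Tw: "weak_grad (\<lambda>x. t * ub x) (\<lambda>x. t *\<^sub>R gu x)" using L2_grad_ut[of t] unfolding L2_grad_def by blast
  have gum: "(\<lambda>x::'a. t *\<^sub>R gu x \<bullet> i) \<in> borel_measurable lborel" for i
    unfolding measurable_lborel2 by (intro borel_measurable_continuous_onI continuous_intros gu_cont)
  have comp: "AE x in lborel. G x \<bullet> i - t *\<^sub>R gu x \<bullet> i = 0" if i: "i \<in> Basis" for i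
  proof (rule FL)
    show "(\<lambda>x. G x \<bullet> i - t *\<^sub>R gu x \<bullet> i) \<in> borel_measurable lborel"
      using Gm gum[of i] by measurable
  next
    fix a b :: 'a
    have ia: "integrable lborel (\<lambda>x. indicator (box a b) x * (G x \<bullet> i))"
    proof (rule Bochner_Integration.integrable_bound)
      show "integrable lborel (\<lambda>x. (norm (G x))\<^sup>2 + indicator (box a b) x)"
        using Gi by (intro Bochner_Integration.integrable_add integrable_real_indicator emeasure_lborel_box_finite) auto
      show "(\<lambda>x. indicator (box a b) x * (G x \<bullet> i)) \<in> borel_measurable lborel"
        using Gm by measurable
      show "AE x in lborel. norm (indicator (box a b) x * (G x \<bullet> i)) \<le> norm ((norm (G x))\<^sup>2 + indicator (box a b) x :: real)"
      proof (intro AE_I2)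
        fix x
        have "\<bar>G x \<bullet> i\<bar> \<le> norm (G x)" using i by (simp add: Basis_le_norm)
        moreover have "norm (G x) \<le> (norm (G x))\<^sup>2 + 1"
          by (rule le_sq1)
        ultimately show "norm (indicator (box a b) x * (G x \<bullet> i)) \<le> norm ((norm (G x))\<^sup>2 + indicator (box a b) x :: real)"
          by (auto simp: indicator_def)
      qed
    qed
    have ib: "integrable lborel (\<lambda>x. indicator (box a b) x * (t *\<^sub>R gu x \<bullet> i))"
    proof -
      have c: "integrable lborel (\<lambda>x. t *\<^sub>R gu x \<bullet> i)"
        by (rule cont_cs_integrable[where R=2]) (auto intro!: continuous_intros gu_cont simp: gu_supp)
      show ?thesis using integrable_mult_indicator[OF _ c, of "box a b"] by simp
    qed
    show "integrable lborel (\<lambda>x. indicator (box a b) x * (G x \<bullet> i - t *\<^sub>R gu x \<bullet> i))"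
      using Bochner_Integration.integrable_diff[OF ia ib] by (simp add: algebra_simps)
  next
    fix \<phi> :: "'a \<Rightarrow> real" and g assume tf: "test_fun \<phi> g"
    obtain R where R: "\<And>x. norm x > R \<Longrightarrow> \<phi> x = 0" using test_supp[OF tf] by blast
    have phic: "continuous_on UNIV \<phi>" by (rule test_cont[OF tf])
    have iphi2: "integrable lborel (\<lambda>x. (\<phi> x)^2)"
      by (rule cont_cs_integrable[where R=R]) (auto intro!: continuous_intros phic simp: R)
    have i1: "integrable lborel (\<lambda>x. (G x \<bullet> i) * \<phi> x)"
    proof (rule Bochner_Integration.integrable_bound)
      show "integrable lborel (\<lambda>x. (norm (G x))\<^sup>2 + (\<phi> x)^2)"
        using Gi iphi2 by (intro Bochner_Integration.integrable_add)
      show "(\<lambda>x. (G x \<bullet> i) * \<phi> x) \<in> borel_measurable lborel"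
      proof -
        have phim: "\<phi> \<in> borel_measurable lborel"
          unfolding measurable_lborel2 by (rule borel_measurable_continuous_onI[OF phic])
        show ?thesis using Gm phim by measurable
      qed
      show "AE x in lborel. norm ((G x \<bullet> i) * \<phi> x) \<le> norm ((norm (G x))\<^sup>2 + (\<phi> x)^2)"
      proof (intro AE_I2)
        fix x
        have "\<bar>G x \<bullet> i\<bar> \<le> norm (G x)" using i by (simp add: Basis_le_norm)
        then have "\<bar>G x \<bullet> i\<bar> * \<bar>\<phi> x\<bar> \<le> norm (G x) * \<bar>\<phi> x\<bar>" by (rule mult_right_mono) simp
        also have "\<dots> \<le> (norm (G x))\<^sup>2 + (\<phi> x)^2"
          using ab_le[of "norm (G x)" "\<bar>\<phi> x\<bar>"] by simp
        finally show "norm ((G x \<bullet> i) * \<phi> x) \<le> norm ((norm (G x))\<^sup>2 + (\<phi> x)^2)"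
          by (simp add: abs_mult)
      qed
    qed
    have i2: "integrable lborel (\<lambda>x. (t *\<^sub>R gu x \<bullet> i) * \<phi> x)"
      by (rule cont_cs_integrable[where R=2]) (auto intro!: continuous_intros phic gu_cont simp: gu_supp)
    have e1: "(\<integral>x. t * ub x * (g x \<bullet> i) \<partial>lborel) = - (\<integral>x. (G x \<bullet> i) * \<phi> x \<partial>lborel)"
      using Gw tf i by (auto simp: weak_grad_def)
    have e2: "(\<integral>x. t * ub x * (g x \<bullet> i) \<partial>lborel) = - (\<integral>x. (t *\<^sub>R gu x \<bullet> i) * \<phi> x \<partial>lborel)"
      using Tw tf i by (auto simp: weak_grad_def)
    have "(\<integral>x. (G x \<bullet> i - t *\<^sub>R gu x \<bullet> i) * \<phi> x \<partial>lborel) =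
        (\<integral>x. (G x \<bullet> i) * \<phi> x \<partial>lborel) - (\<integral>x. (t *\<^sub>R gu x \<bullet> i) * \<phi> x \<partial>lborel)"
      using Bochner_Integration.integral_diff[OF i1 i2] by (simp add: algebra_simps)
    then show "(\<integral>x. (G x \<bullet> i - t *\<^sub>R gu x \<bullet> i) * \<phi> x \<partial>lborel) = 0" using e1 e2 by simp
  qed
  have "AE x in lborel. \<forall>i\<in>Basis. G x \<bullet> i - t *\<^sub>R gu x \<bullet> i = 0"
    by (rule AE_finite_allI[OF finite_Basis comp])
  then show ?thesis
  proof (rule AE_mp, intro AE_I2 impI)
    fix x assume a: "\<forall>i\<in>Basis. G x \<bullet> i - t *\<^sub>R gu x \<bullet> i = 0"
    show "G x = t *\<^sub>R gu x"
    proof (rule euclidean_eqI)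
      fix i :: 'a assume "i \<in> Basis"
      then show "G x \<bullet> i = t *\<^sub>R gu x \<bullet> i" using a by simp
    qed
  qed
qed



lemma ub_zero_out: "x \<notin> cball 0 2 - ball 0 1 \<Longrightarrow> ub x = 0"
  using ub_supp[of x] ub_supp1[of x] by (auto simp: not_le)

lemma annulus_int:
  fixes W :: "real \<Rightarrow> real" and Q :: "real \<Rightarrow> real"
  assumes W: "continuous_on {0<..} W" and Q: "continuous_on UNIV Q" and Q0: "Q 0 = 0"
  shows "integrable lborel (\<lambda>x::'a::euclidean_space. W (norm x) * Q (ub x))"
proof -
  define S where "S = cball (0::'a) 2 - ball 0 1"
  have cS: "compact S" unfolding S_def by (intro compact_diff) auto
  have nS: "norm ` S \<subseteq> {0<..}" by (auto simp: S_def)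
  have "continuous_on S (\<lambda>x. W (norm x))"
    by (rule continuous_on_compose2[OF W _ nS]) (intro continuous_intros)
  moreover have "continuous_on S (\<lambda>x. Q (ub x))"
    by (rule continuous_on_compose2[OF Q]) (auto intro: continuous_on_subset[OF ub_cont])
  ultimately have "continuous_on S (\<lambda>x. W (norm x) * Q (ub x))" by (intro continuous_intros)
  from borel_integrable_compact[OF cS this]
  have "integrable lborel (\<lambda>x. indicator S x *\<^sub>R (W (norm x) * Q (ub x)))" .
  also have "(\<lambda>x. indicator S x *\<^sub>R (W (norm x) * Q (ub x))) = (\<lambda>x. W (norm x) * Q (ub x))"
  proof (rule ext)
    fix x :: 'a
    show "indicator S x *\<^sub>R (W (norm x) * Q (ub x)) = W (norm x) * Q (ub x)"
    proof (cases "x \<in> S")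
      case False
      then have "ub x = 0" using ub_zero_out[of x] by (simp add: S_def)
      then show ?thesis using False Q0 by simp
    qed simp
  qed
  finally show ?thesis .
qed

lemma ut_H1:
  fixes V :: "real \<Rightarrow> real"
  assumes dim: "DIM('a::euclidean_space) \<ge> 3" and V: "continuous_on {0<..} V"
  shows "H1Vr V (\<lambda>x::'a. t * ub x)"
  unfolding H1Vr_def D12_def
proof (intro conjI)
  show "(\<lambda>x::'a. t * ub x) \<in> borel_measurable lborel"
    unfolding measurable_lborel2 by (intro borel_measurable_continuous_onI continuous_intros ub_cont)
  have p: "2 * real DIM('a) / (real DIM('a) - 2) > 0" using dim by (auto intro!: divide_pos_pos)
  show "integrable lborel (\<lambda>x::'a. \<bar>t * ub x\<bar> powr (2 * real DIM('a) / (real DIM('a) - 2)))"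
  proof (rule cont_cs_integrable[where R=2])
    show "continuous_on UNIV (\<lambda>x::'a. \<bar>t * ub x\<bar> powr (2 * real DIM('a) / (real DIM('a) - 2)))"
      using p by (intro continuous_on_powr' continuous_intros ub_cont) auto
  qed (simp add: ub_supp)
  show "\<exists>G. L2_grad (\<lambda>x::'a. t * ub x) G" using L2_grad_ut by blast
  show "radial (\<lambda>x::'a. t * ub x)"
    unfolding radial_def ub_def by (metis power2_norm_eq_inner)
  show "integrable lborel (\<lambda>x::'a. V (norm x) * (t * ub x)\<^sup>2)"
    by (rule annulus_int[OF V, where Q="\<lambda>y. (t * y)^2"]) (auto intro!: continuous_intros)
qed

lemma normsq_ut:
  "normsq V (\<lambda>x::'a::euclidean_space. t * ub x) =
     t^2 * ((\<integral>x. (norm (gu x :: 'a))\<^sup>2 \<partial>lborel) + (\<integral>x. V (norm x) * (ub (x::'a))\<^sup>2 \<partial>lborel))"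
proof -
  have LW: "L2_grad (\<lambda>x::'a. t * ub x) (wgrad (\<lambda>x::'a. t * ub x))"
  proof -
    have ex: "\<exists>G. L2_grad (\<lambda>x::'a. t * ub x) G" using L2_grad_ut by blast
    show ?thesis unfolding wgrad_def by (rule someI_ex[OF ex])
  qed
  have AEg: "AE x in lborel. wgrad (\<lambda>x::'a. t * ub x) x = t *\<^sub>R gu x" by (rule grad_unique[OF LW])
  have wm: "wgrad (\<lambda>x::'a. t * ub x) \<in> borel_measurable lborel" using LW by (simp add: L2_grad_def)
  have "(\<integral>x. (norm (wgrad (\<lambda>x::'a. t * ub x) x))\<^sup>2 \<partial>lborel) = (\<integral>x. (norm (t *\<^sub>R gu (x::'a)))\<^sup>2 \<partial>lborel)"
  proof (rule Bochner_Integration.integral_cong_AE)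
    show "(\<lambda>x. (norm (wgrad (\<lambda>x::'a. t * ub x) x))\<^sup>2) \<in> borel_measurable lborel" using wm by measurable
    show "(\<lambda>x::'a. (norm (t *\<^sub>R gu x))\<^sup>2) \<in> borel_measurable lborel"
      unfolding measurable_lborel2 by (intro borel_measurable_continuous_onI continuous_intros gu_cont)
    show "AE x in lborel. (norm (wgrad (\<lambda>x::'a. t * ub x) x))\<^sup>2 = (norm (t *\<^sub>R gu x))\<^sup>2"
      using AEg by (rule AE_mp) (intro AE_I2 impI, simp)
  qed
  also have "\<dots> = t^2 * (\<integral>x. (norm (gu x :: 'a))\<^sup>2 \<partial>lborel)"
    by (simp add: power_mult_distrib)
  finally have A: "(\<integral>x. (norm (wgrad (\<lambda>x::'a. t * ub x) x))\<^sup>2 \<partial>lborel) = t^2 * (\<integral>x. (norm (gu x :: 'a))\<^sup>2 \<partial>lborel)" .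
  have B: "(\<integral>x. V (norm x) * (t * ub (x::'a))\<^sup>2 \<partial>lborel) = t^2 * (\<integral>x. V (norm x) * (ub (x::'a))\<^sup>2 \<partial>lborel)"
  proof -
    have eq: "(\<lambda>x::'a. V (norm x) * (t * ub x)\<^sup>2) = (\<lambda>x. t^2 * (V (norm x) * (ub x)\<^sup>2))"
      by (simp add: fun_eq_iff power_mult_distrib mult_ac)
    show ?thesis by (simp only: eq integral_mult_right_zero)
  qed
  show ?thesis unfolding normsq_def A B by (simp add: algebra_simps)
qed

lemma primF_alt: "primF f u = (LBINT y=ereal 0..ereal u. f y)"
  by (simp add: primF_def zero_ereal_def)

lemma primF_0: "primF f 0 = 0" by (simp add: primF_alt)

lemma primF_cont:
  assumes f: "continuous_on UNIV f"
  shows "continuous_on UNIV (primF f)"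
proof (rule continuous_at_imp_continuous_on, intro ballI)
  fix x :: real
  have "((\<lambda>u. LBINT y=ereal 0..ereal u. f y) has_vector_derivative f x) (at x within {-\<bar>x\<bar>-1..\<bar>x\<bar>+1})"
    by (rule interval_integral_FTC2[of "-\<bar>x\<bar>-1" 0 "\<bar>x\<bar>+1" f x]) (auto intro: continuous_on_subset[OF f])
  moreover have "at x within {-\<bar>x\<bar>-1..\<bar>x\<bar>+1} = at x"
    by (rule at_within_Icc_at) auto
  ultimately have "((\<lambda>u. LBINT y=ereal 0..ereal u. f y) has_vector_derivative f x) (at x)" by simp
  then have "isCont (\<lambda>u. LBINT y=ereal 0..ereal u. f y) x"
    by (rule has_vector_derivative_continuous)
  then show "isCont (primF f) x" by (simp add: primF_alt[abs_def])
qed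



lemma pp_low: assumes "25/16 \<le> s" "s \<le> 49/16" shows "1 \<le> pp s"
proof -
  have P: "0 \<le> (s - 25/16) * (49/16 - s)" using assms by (intro mult_nonneg_nonneg) auto
  have E1: "(s - 25/16) * (49/16 - s) = -(s * s) + 74/16 * s - 1225/256" by (simp add: algebra_simps)
  have E2: "pp s = -(s * s) + 5 * s - 4" by (simp add: pp_def algebra_simps)
  show ?thesis using P E1 E2 assms by linarith
qed

lemma pp_up: "pp s \<le> 9/4"
proof -
  have "0 \<le> (s - 5/2)^2" by simp
  moreover have "(s - 5/2)^2 = s * s - 5 * s + 25/4" by (simp add: power2_eq_square algebra_simps)
  moreover have E2: "pp s = -(s * s) + 5 * s - 4" by (simp add: pp_def algebra_simps)
  ultimately show ?thesis by linarith
qed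

lemma ub_le6: "ub x \<le> 6"
proof (cases "pp (x \<bullet> x) > 0")
  case True
  have h: "(pp (x \<bullet> x))^2 \<le> (9/4)^2" using True pp_up by (intro power_mono) auto
  have h2: "(9/4::real)^2 = 81/16" by (simp add: power2_eq_square)
  have "ub x = (pp (x \<bullet> x))^2" using True by (simp add: ub_def msq_def max_def)
  then show ?thesis using h h2 by linarith
next
  case False
  then show ?thesis by (simp add: ub_def msq_def max_def)
qed

lemma ub_ge1:
  fixes e0 :: "'a::euclidean_space"
  assumes e0: "e0 \<in> Basis" and x: "x \<in> cball ((3/2) *\<^sub>R e0) (1/4)"
  shows "1 \<le> ub x"
proof -
  have n0: "norm ((3/2) *\<^sub>R e0) = 3/2" using e0 by simp
  have "\<bar>norm ((3/2) *\<^sub>R e0) - norm x\<bar> \<le> norm ((3/2) *\<^sub>R e0 - x)" by (rule norm_triangle_ineq3)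
  also have "\<dots> \<le> 1/4" using x by (simp add: dist_norm)
  finally have h: "\<bar>norm ((3/2) *\<^sub>R e0) - norm x\<bar> \<le> 1/4" .
  have nx: "5/4 \<le> norm x" "norm x \<le> 7/4" using abs_le_D1[OF h] abs_le_D2[OF h] n0 by linarith+
  have "(5/4)^2 \<le> (norm x)^2" using nx by (intro power_mono) auto
  moreover have "(norm x)^2 \<le> (7/4)^2" using nx by (intro power_mono) auto
  moreover have xx: "x \<bullet> x = (norm x)^2" by (simp add: power2_norm_eq_inner)
  moreover have "(5/4::real)^2 = 25/16" "(7/4::real)^2 = 49/16" by (simp_all add: power2_eq_square)
  ultimately have s: "25/16 \<le> x \<bullet> x" "x \<bullet> x \<le> 49/16" by linarith+
  have p: "1 \<le> pp (x \<bullet> x)" by (rule pp_low[OF s])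
  then have "1 \<le> (pp (x \<bullet> x))^2" by simp
  then show ?thesis using p by (simp add: ub_def msq_def max_def)
qed

theorem mainTheorem10:
  fixes V K f :: "real \<Rightarrow> real"
    and a0 a b0 b M q1 q2 :: real
  assumes dim: "DIM('a::euclidean_space) \<ge> 3"
    and V_cont: "continuous_on {0<..} V"
    and V_nonneg: "\<forall>r>0. V r \<ge> 0"
    and V0: "Liminf (at_right 0) (\<lambda>r. ereal (V r / r powr a0)) > 0"
    and Vinf: "Liminf at_top (\<lambda>r. ereal (V r / r powr a)) > 0"
    and K_cont: "continuous_on {0<..} K"
    and K_pos: "\<forall>r>0. K r > 0"
    and K0: "Limsup (at_right 0) (\<lambda>r. ereal (K r / r powr b0)) < \<infinity>"
    and Kinf: "Limsup at_top (\<lambda>r. ereal (K r / r powr b)) < \<infinity>"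
    and b0_gt: "ereal b0 > b_star DIM('a) a0"
    and f_cont: "continuous_on UNIV f"
    and M_pos: "M > 0"
    and q1: "in_I1 DIM('a) a0 b0 q1"
    and q2: "in_I2 DIM('a) a b q2"
    and f_bound: "\<forall>t. \<bar>f t\<bar> \<le> M * min (\<bar>t\<bar> powr (q1 - 1)) (\<bar>t\<bar> powr (q2 - 1))"
    and theta: "\<exists>\<theta><2. Liminf (at_right 0) (\<lambda>t. ereal (primF f t / t powr \<theta>)) > 0"
  shows "\<exists>u :: 'a \<Rightarrow> real. H1Vr V u \<and> Ifun V K f u < 0"
proof -
  obtain \<theta> where th2: "\<theta> < 2" and thL: "Liminf (at_right 0) (\<lambda>t. ereal (primF f t / t powr \<theta>)) > 0"
    using theta by blast
  obtain c where c0: "0 < ereal c" "ereal c < Liminf (at_right 0) (\<lambda>t. ereal (primF f t / t powr \<theta>))"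
    using ereal_dense2[OF thL] by blast
  have cpos: "c > 0" using c0(1) by simp
  have "eventually (\<lambda>t. ereal c < ereal (primF f t / t powr \<theta>)) (at_right (0::real))"
    by (rule less_LiminfD[OF c0(2)])
  then obtain \<delta> where \<delta>0: "\<delta> > 0" and \<delta>: "\<And>s. 0 < s \<Longrightarrow> s < \<delta> \<Longrightarrow> c < primF f s / s powr \<theta>"
    unfolding eventually_at_right_field by auto
  define th where "th = max \<theta> 1"
  have th1: "1 \<le> th" "th < 2" "\<theta> \<le> th" using th2 by (auto simp: th_def)
  define d where "d = min \<delta> 1"
  have d0: "0 < d" "d \<le> 1" "d \<le> \<delta>" using \<delta>0 by (auto simp: d_def)
  have Flow: "c * s powr th \<le> primF f s" if s: "0 < s" "s < d" for s
  proof -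
    have sp: "s powr \<theta> > 0" using s by simp
    have "c < primF f s / s powr \<theta>" using \<delta>[of s] s d0 by auto
    then have "c * s powr \<theta> < primF f s" using sp by (simp add: field_simps)
    moreover have "s powr th \<le> s powr \<theta>" using s d0 th1 by (intro powr_mono') auto
    then have "c * s powr th \<le> c * s powr \<theta>" using cpos by (intro mult_left_mono) auto
    ultimately show ?thesis by linarith
  qed
  have Fnn: "0 \<le> primF f s" if "0 \<le> s" "s < d" for s
  proof (cases "s = 0")
    case True then show ?thesis by (simp add: primF_0)
  next
    case False
    then have "c * s powr th \<le> primF f s" using that by (intro Flow) auto
    moreover have "0 \<le> c * s powr th" using cpos by simp
    ultimately show ?thesis by linarith
  qed
  obtain e0 :: 'a where e0: "e0 \<in> Basis" using nonempty_Basis by blast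
  define S where "S = cball ((3/2) *\<^sub>R e0) (1/4::real)"
  have nS: "norm x \<ge> 5/4" if "x \<in> S" for x
  proof -
    have "\<bar>norm ((3/2) *\<^sub>R e0) - norm x\<bar> \<le> norm ((3/2) *\<^sub>R e0 - x)" by (rule norm_triangle_ineq3)
    also have "\<dots> \<le> 1/4" using that by (simp add: S_def dist_norm)
    finally have h: "\<bar>norm ((3/2) *\<^sub>R e0) - norm x\<bar> \<le> 1/4" .
    have "norm ((3/2) *\<^sub>R e0) = 3/2" using e0 by simp
    then show ?thesis using abs_le_D1[OF h] abs_le_D2[OF h] by linarith
  qed
  have nS': "norm ` S \<subseteq> {0<..}"
  proof
    fix r assume "r \<in> norm ` S"
    then obtain x where xS: "x \<in> S" and r: "r = norm x" by auto
    have "0 < norm x" using nS[OF xS] by linarith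
    then show "r \<in> {0<..}" using r by simp
  qed
  have KS: "continuous_on S (\<lambda>x. K (norm x))"
    by (rule continuous_on_compose2[OF K_cont _ nS']) (intro continuous_intros)
  have Sne: "S \<noteq> {}" by (simp add: S_def)
  obtain y where yS: "y \<in> S" and ymin: "\<And>x. x \<in> S \<Longrightarrow> K (norm y) \<le> K (norm x)"
    using continuous_attains_inf[OF _ Sne KS] by (auto simp: S_def)
  define kmin where "kmin = K (norm y)"
  have kpos: "kmin > 0"
  proof -
    have "0 < norm y" using nS[OF yS] by linarith
    then show ?thesis using K_pos by (simp add: kmin_def)
  qed
  define m where "m = measure lborel S"
  have mpos: "m > 0" by (simp add: m_def S_def)
  define A where "A = (\<integral>x. (norm (gu x :: 'a))\<^sup>2 \<partial>lborel) + (\<integral>x. V (norm x) * (ub (x::'a))\<^sup>2 \<partial>lborel)"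
  have A0: "A \<ge> 0"
  proof -
    have "0 \<le> (\<integral>x. (norm (gu x :: 'a))\<^sup>2 \<partial>lborel)" by simp
    moreover have "0 \<le> (\<integral>x. V (norm x) * (ub (x::'a))\<^sup>2 \<partial>lborel)"
    proof (rule Bochner_Integration.integral_nonneg)
      fix x :: 'a
      show "0 \<le> V (norm x) * (ub x)\<^sup>2"
      proof (cases "x = 0")
        case True then show ?thesis by (simp add: ub_def pp_def msq_def)
      next
        case False then show ?thesis using V_nonneg by simp
      qed
    qed
    ultimately show ?thesis by (simp add: A_def)
  qed
  define \<kappa> where "\<kappa> = kmin * c * m"
  have \<kappa>0: "\<kappa> > 0" using kpos cpos mpos by (simp add: \<kappa>_def)
  define q where "q = \<kappa> / (A + 1)"
  have q0: "q > 0" using \<kappa>0 A0 by (simp add: q_def)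
  define t where "t = min (d / 7) (q powr (1 / (2 - th)))"
  have t0: "t > 0" using d0 q0 by (simp add: t_def)
  have td: "6 * t < d" using d0 by (simp add: t_def)
  define u where "u = (\<lambda>x::'a. t * ub x)"
  have H: "H1Vr V u" unfolding u_def by (rule ut_H1[OF dim V_cont])
  have NS: "normsq V u = t^2 * A" unfolding u_def A_def by (rule normsq_ut)
  have tub: "0 \<le> t * ub x" "t * ub x < d" for x :: 'a
  proof -
    show "0 \<le> t * ub x" using t0 ub_nonneg[of x] by simp
    have "t * ub x \<le> t * 6" by (rule mult_left_mono[OF ub_le6]) (use t0 in simp)
    then show "t * ub x < d" using td by linarith
  qed
  have Jint: "integrable lborel (\<lambda>x::'a. K (norm x) * primF f (t * ub x))"
  proof (rule annulus_int[OF K_cont, where Q="\<lambda>y. primF f (t * y)"])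
    show "continuous_on UNIV (\<lambda>y. primF f (t * y))"
      by (rule continuous_on_compose2[OF primF_cont[OF f_cont]]) (auto intro!: continuous_intros)
  qed (simp add: primF_0)
  have Lint: "integrable lborel (\<lambda>x::'a. indicator S x * (kmin * c * t powr th))"
    unfolding S_def by (intro integrable_mult_left integrable_real_indicator emeasure_lborel_cball_finite) auto
  have pw: "indicator S x * (kmin * c * t powr th) \<le> K (norm x) * primF f (t * ub x)" for x
  proof (cases "x \<in> S")
    case True
    have u1: "1 \<le> ub x" using ub_ge1[OF e0] True by (simp add: S_def)
    have Kx: "kmin \<le> K (norm x)" using ymin[OF True] by (simp add: kmin_def)
    have tp: "0 < t * ub x" using t0 u1 by simp
    have "t powr th \<le> (t * ub x) powr th"
      using t0 u1 th1 by (intro powr_mono2) (auto intro: mult_left_mono[of 1, simplified])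
    then have "c * t powr th \<le> c * (t * ub x) powr th" using cpos by (intro mult_left_mono) auto
    also have "\<dots> \<le> primF f (t * ub x)" using Flow[OF tp tub(2)] .
    finally have F1: "c * t powr th \<le> primF f (t * ub x)" .
    have "kmin * (c * t powr th) \<le> K (norm x) * primF f (t * ub x)"
      using Kx F1 kpos cpos by (intro mult_mono) auto
    then show ?thesis using True by (simp add: mult_ac)
  next
    case False
    have "0 \<le> K (norm x) * primF f (t * ub x)"
    proof (cases "ub x = 0")
      case True then show ?thesis by (simp add: primF_0)
    next
      case nz: False
      then have "norm x \<ge> 1" using ub_supp1[of x] by force
      then have "0 < norm x" by linarith
      then have "K (norm x) > 0" using K_pos by blast
      moreover have "0 \<le> primF f (t * ub x)" using Fnn tub by blast
      ultimately show ?thesis by simp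
    qed
    then show ?thesis using False by simp
  qed
  have "(\<integral>x. indicator S x * (kmin * c * t powr th) \<partial>lborel) \<le> (\<integral>x. K (norm x) * primF f (t * ub (x::'a)) \<partial>lborel)"
    by (rule integral_mono[OF Lint Jint pw])
  moreover have "(\<integral>x. indicator S x * (kmin * c * t powr th) \<partial>lborel) = \<kappa> * t powr th"
    by (simp add: \<kappa>_def m_def mult_ac)
  ultimately have J0: "\<kappa> * t powr th \<le> (\<integral>x. K (norm x) * primF f (t * ub (x::'a)) \<partial>lborel)"
    by linarith
  then have J: "\<kappa> * t powr th \<le> (\<integral>x. K (norm x) * primF f (u x) \<partial>lborel)"
    by (simp add: u_def)
  have Y: "t powr (2 - th) \<le> q"
  proof -
    have "t powr (2 - th) \<le> (q powr (1 / (2 - th))) powr (2 - th)"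
      using t0 th1 by (intro powr_mono2) (auto simp: t_def)
    also have "\<dots> = q" using th1 q0 by (simp add: powr_powr)
    finally show ?thesis .
  qed
  have t2: "t^2 = t powr th * t powr (2 - th)"
    using t0 by (simp add: powr_add[symmetric])
  have P0: "t powr th > 0" using t0 by simp
  have "t^2 * A / 2 \<le> t powr th * q * A / 2"
    unfolding t2 using Y P0 A0 by (intro divide_right_mono mult_right_mono mult_left_mono) auto
  also have "\<dots> < \<kappa> * t powr th"
  proof -
    have A1: "A + 1 \<noteq> 0" "0 < 2 * (A + 1)" using A0 by auto
    have r: "A / (2 * (A + 1)) < 1" using A0 A1 by (simp add: divide_less_eq)
    have e: "q * A / 2 = \<kappa> * (A / (2 * (A + 1)))" unfolding q_def using A1 by (simp add: field_simps)
    have "\<kappa> * (A / (2 * (A + 1))) < \<kappa> * 1" using r \<kappa>0 by (rule mult_strict_left_mono)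
    then have "q * A / 2 < \<kappa>" using e by linarith
    then show ?thesis using P0 by (simp add: mult_ac)
  qed
  finally have "normsq V u / 2 < (\<integral>x. K (norm x) * primF f (u x) \<partial>lborel)"
    using J NS by simp
  then have "Ifun V K f u < 0" by (simp add: Ifun_def)
  with H show ?thesis by blast
qed


end
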